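(* Consider D-SGD under Assumptions 1 and 3 with a constant step size $\gamma>0$ and constant mixing parameter $p\in(0,1]$, with all nodes initialized at the same point (so $\Xi_0=0$). Let $a_t:=\mathbb{E}[\Xi_t^2]$ and $b_t:=\mathbb{E}[\phi_t^2]$, where $\phi_t^2:=\frac1n\sum_{i=1}^n\|\nabla f_i(x_i^{(t)})\|_2^2$. (i) If $b_t\le\phi^2$ for all $t$ for some constant $\phi\ge 0$, then for all $t\ge0$, $a_t\le 6(1-p)\gamma^2\big(\frac{\phi^2}{p^2}+\frac{\sigma^2}{p}\big)$. (ii) If $b_t\le(1+p/4)\,b_{t+1}$ for all $t\ge0$, then for all $t\ge1$, $a_t\le 12(1-p)\gamma^2\big(\frac{b_{t-1}}{p^2}+\frac{\sigma^2}{p}\big)$. In particular $\Xi_t^2 = (1-p)\gamma^2\cdot\mathcal{O}\big(\frac{\phi^2}{p^2}+\frac{\sigma^2}{p}\big)$ in expectation.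
   Context: Problem: $f(x):=\frac1n\sum_{i=1}^n f_i(x)$, $f_i(x):=\mathbb{E}_{\xi\sim\mathcal{D}_i}[F_i(x,\xi)]$, with $\nabla F_i(x,\xi)$ an unbiased stochastic gradient of $f_i$. D-SGD: $x_i^{(t+1)}=\sum_{j=1}^n w^{(t)}_{ij}\big(x_j^{(t)}-\gamma\nabla F_j(x_j^{(t)},\xi_j^{(t)})\big)$ with $\xi_j^{(t)}\sim\mathcal{D}_j$ independent and mixing matrices $W^{(t)}$ sampled independently of everything else. Notation: $\bar{x}:=\frac1n\sum_i x_i$, $\bar X:=X\frac1n\mathbf{1}\mathbf{1}^\top$ for $X=[x_1,\dots,x_n]$, consensus distance $\Xi_t^2:=\frac1n\sum_{i}\|\bar x^{(t)}-x_i^{(t)}\|_2^2$. Assumption 1: every sample of $W$ is doubly stochastic and there is $p\in(0,1]$ with $\mathbb{E}_W\|XW-\bar X\|_F^2\le(1-p)\|X-\bar X\|_F^2$ for all $X\in\mathbb{R}^{d\times n}$. Assumption 3: for all $x_1,\dots,x_n$, $\frac1n\sum_i\mathbb{E}_{\xi_i}\|\nabla F_i(x_i,\xi_i)-\nabla f_i(x_i)\|_2^2\le\sigma^2$. *)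

theory Defs
  imports "HOL-Analysis.Analysis" "HOL-Probability.Probability"
begin

text \<open>Nodes are indexed by a finite type 'n (n = CARD('n)); parameters live in real^'d.
A state is X = [x_1,...,x_n], represented as (real^'d)^'n with X $ i = x_i.
A mixing matrix is W :: real^'n^'n with W $ i $ j = w_ij.\<close>

definition doubly_stochastic :: "real^'n^'n \<Rightarrow> bool" where
  "doubly_stochastic W \<longleftrightarrow> (\<forall>i j. 0 \<le> W $ i $ j) \<and>
     (\<forall>i. (\<Sum>j\<in>UNIV. W $ i $ j) = 1) \<and> (\<forall>j. (\<Sum>i\<in>UNIV. W $ i $ j) = 1)"

definition mix :: "real^'n^'n \<Rightarrow> (real^'d)^'n \<Rightarrow> (real^'d)^'n" where
  "mix W Y = (\<chi> i. \<Sum>j\<in>UNIV. W $ i $ j *\<^sub>R Y $ j)"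

definition avg :: "(real^'d)^('n::finite) \<Rightarrow> real^'d" where
  "avg X = (1 / real CARD('n)) *\<^sub>R (\<Sum>i\<in>UNIV. X $ i)"

definition dev_sq :: "(real^'d)^('n::finite) \<Rightarrow> real" where
  "dev_sq X = (\<Sum>i\<in>UNIV. (norm (avg X - X $ i))\<^sup>2)"

definition consensus_sq :: "(real^'d)^('n::finite) \<Rightarrow> real" where
  "consensus_sq X = (1 / real CARD('n)) * (\<Sum>i\<in>UNIV. (norm (avg X - X $ i))\<^sup>2)"

definition grad_sq :: "('n \<Rightarrow> real^'d \<Rightarrow> real^'d) \<Rightarrow> (real^'d)^('n::finite) \<Rightarrow> real" where
  "grad_sq gf X = (1 / real CARD('n)) * (\<Sum>i\<in>UNIV. (norm (gf i (X $ i)))\<^sup>2)"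

definition dsgd_step :: "('n::finite \<Rightarrow> 'b measure) \<Rightarrow> (real^'n^'n) measure \<Rightarrow>
    ('n \<Rightarrow> real^'d \<Rightarrow> 'b \<Rightarrow> real^'d) \<Rightarrow> real \<Rightarrow> (real^'d)^'n \<Rightarrow> ((real^'d)^'n) measure" where
  "dsgd_step D WD gF \<gamma> X =
     PiM UNIV D \<bind> (\<lambda>\<xi>. WD \<bind> (\<lambda>W.
        return borel (mix W (\<chi> j. X $ j - \<gamma> *\<^sub>R gF j (X $ j) (\<xi> j)))))"

definition dsgd_law :: "('n::finite \<Rightarrow> 'b measure) \<Rightarrow> (real^'n^'n) measure \<Rightarrow>
    ('n \<Rightarrow> real^'d \<Rightarrow> 'b \<Rightarrow> real^'d) \<Rightarrow> real \<Rightarrow> real^'d \<Rightarrow> nat \<Rightarrow> ((real^'d)^'n) measure" where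
  "dsgd_law D WD gF \<gamma> x0 t =
     ((\<lambda>\<mu>. \<mu> \<bind> dsgd_step D WD gF \<gamma>) ^^ t) (return borel (\<chi> i. x0))"

end

theory Submission imports Defs begin

lemma measurable_vec_lambda[measurable (raw)]:
  fixes f :: "'a \<Rightarrow> 'i::finite \<Rightarrow> 'b::euclidean_space"
  assumes "\<And>i. (\<lambda>x. f x i) \<in> borel_measurable M"
  shows "(\<lambda>x. \<chi> i. f x i) \<in> borel_measurable M"
  unfolding borel_measurable_euclidean_space[where 'c="'b^'i"]
proof
  fix b :: "'b^'i" assume "b \<in> Basis"
  then obtain i u where b: "b = axis i u" "u \<in> Basis" unfolding Basis_vec_def by auto
  have "(\<lambda>x. f x i \<bullet> u) \<in> borel_measurable M" using assms[of i] by measurable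
  then show "(\<lambda>x. (\<chi> i. f x i) \<bullet> b) \<in> borel_measurable M" using b by (simp add: inner_axis)
qed

lemma measurable_vec_nth[measurable (raw)]:
  fixes f :: "'a \<Rightarrow> 'b::euclidean_space^'i::finite"
  assumes "f \<in> borel_measurable M"
  shows "(\<lambda>x. f x $ i) \<in> borel_measurable M"
proof -
  have "(\<lambda>x. x $ i) \<in> borel_measurable (borel :: ('b^'i) measure)"
    by (intro borel_measurable_continuous_onI continuous_intros)
  from measurable_compose[OF assms this] show ?thesis .
qed

lemma mixk_meas:
  fixes WD :: "(real^'n::finite^'n) measure" and Y :: "'a \<Rightarrow> (real^'d)^'n"
  assumes WD_prob: "prob_space WD" and WD_sets: "sets WD = sets borel"
    and Ym: "Y \<in> borel_measurable M"
  shows "(\<lambda>z. WD \<bind> (\<lambda>W. return borel (mix W (Y z)))) \<in> M \<rightarrow>\<^sub>M prob_algebra borel"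
proof -
  have WP: "WD \<in> space (prob_algebra (borel :: (real^'n^'n) measure))"
    using WD_prob WD_sets by (auto simp: space_prob_algebra)
  have "(\<lambda>(z, W :: real^'n^'n). mix W (Y z)) \<in> borel_measurable (M \<Otimes>\<^sub>M borel)"
    unfolding mix_def using Ym by measurable
  then have R: "(\<lambda>(z, W). return borel (mix W (Y z))) \<in> M \<Otimes>\<^sub>M borel \<rightarrow>\<^sub>M prob_algebra borel"
    by (simp add: measurable_compose[OF _ measurable_return_prob_space] case_prod_beta')
  show ?thesis
    by (rule measurable_bind_prob_space2[where N=borel, OF measurable_const[OF WP] R])
qed

lemma mix_meas_WD:
  fixes WD :: "(real^'n::finite^'n) measure" and Y :: "(real^'d)^'n"
  assumes WD_sets: "sets WD = sets borel"
  shows "(\<lambda>W. mix W Y) \<in> WD \<rightarrow>\<^sub>M borel"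
proof -
  have "(\<lambda>W. mix W Y) \<in> (borel :: (real^'n^'n) measure) \<rightarrow>\<^sub>M borel"
    unfolding mix_def by measurable
  then show ?thesis by (subst measurable_cong_sets[OF WD_sets refl])
qed

lemma step_meas:
  fixes D :: "'n::finite \<Rightarrow> 'b measure" and WD :: "(real^'n^'n) measure"
    and gF :: "'n \<Rightarrow> real^'d \<Rightarrow> 'b \<Rightarrow> real^'d"
  assumes D_prob: "\<And>i. prob_space (D i)"
    and gF_meas: "\<And>i. (\<lambda>(x, \<xi>). gF i x \<xi>) \<in> borel_measurable (borel \<Otimes>\<^sub>M D i)"
    and WD_prob: "prob_space WD"
    and WD_sets: "sets WD = sets borel"
  shows "dsgd_step D WD gF \<gamma> \<in> borel \<rightarrow>\<^sub>M prob_algebra borel"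
proof -
  have PiP: "PiM UNIV D \<in> space (prob_algebra (PiM UNIV D))"
    using D_prob by (auto simp: space_prob_algebra intro!: prob_space_PiM)
  have g: "(\<lambda>(X, \<xi>). gF j (X $ j) (\<xi> j)) \<in> borel_measurable (borel \<Otimes>\<^sub>M PiM UNIV D)" for j
  proof -
    have "(\<lambda>(X::(real^'d)^'n, \<xi>). (X $ j, \<xi> j)) \<in> (borel \<Otimes>\<^sub>M PiM UNIV D) \<rightarrow>\<^sub>M (borel \<Otimes>\<^sub>M D j)"
      by measurable
    from measurable_compose[OF this gF_meas[of j]] show ?thesis by (simp add: case_prod_beta')
  qed
  have Y: "(\<lambda>z. (\<chi> j. fst z $ j - \<gamma> *\<^sub>R gF j (fst z $ j) (snd z j)) :: (real^'d)^'n) \<in> borel_measurable (borel \<Otimes>\<^sub>M PiM UNIV D)"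
    using g by (simp add: case_prod_beta') measurable
  show ?thesis
    unfolding dsgd_step_def
    apply (rule measurable_bind_prob_space2[where N="PiM UNIV D"])
     apply (rule measurable_const[OF PiP])
    using mixk_meas[OF WD_prob WD_sets Y] by (simp add: case_prod_beta')
qed

lemma Y_meas:
  fixes D :: "'n::finite \<Rightarrow> 'b measure"
    and gF :: "'n \<Rightarrow> real^'d \<Rightarrow> 'b \<Rightarrow> real^'d"
  assumes gF_meas: "\<And>i. (\<lambda>(x, \<xi>). gF i x \<xi>) \<in> borel_measurable (borel \<Otimes>\<^sub>M D i)"
  shows "(\<lambda>\<xi>. gF j (X $ j) (\<xi> j)) \<in> borel_measurable (PiM UNIV D)"
proof -
  have "(\<lambda>\<xi>. (X $ j, \<xi> j)) \<in> PiM UNIV D \<rightarrow>\<^sub>M (borel \<Otimes>\<^sub>M D j)"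
    by measurable
  from measurable_compose[OF this gF_meas[of j]] show ?thesis by simp
qed

lemma norm_add_sq: "(norm (a + b))\<^sup>2 = (norm a)\<^sup>2 + 2 * (a \<bullet> b) + (norm (b::'a::real_inner))\<^sup>2"
  using dot_norm[of a b] by (simp add: field_simps)

lemma norm_diff_sq: "(norm (a - b))\<^sup>2 = (norm a)\<^sup>2 - 2 * (a \<bullet> b) + (norm (b::'a::real_inner))\<^sup>2"
  using dot_norm_neg[of a b] by (simp add: field_simps)

lemma avg_min:
  fixes v :: "'n::finite \<Rightarrow> 'a::real_inner" and c :: 'a
  shows "(\<Sum>i\<in>UNIV. (norm (v i - (1 / real CARD('n)) *\<^sub>R (\<Sum>j\<in>UNIV. v j)))\<^sup>2) \<le> (\<Sum>i\<in>UNIV. (norm (v i - c))\<^sup>2)"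
proof -
  define m where "m = (1 / real CARD('n)) *\<^sub>R (\<Sum>j\<in>UNIV. v j)"
  have s0: "(\<Sum>i\<in>UNIV. v i - m) = 0"
    by (simp add: sum_subtractf m_def sum_constant_scaleR)
  have e: "(norm (v i - c))\<^sup>2 = (norm (v i - m))\<^sup>2 + 2 * ((v i - m) \<bullet> (m - c)) + (norm (m - c))\<^sup>2" for i
  proof -
    have "v i - c = (v i - m) + (m - c)" by simp
    then show ?thesis by (metis norm_add_sq)
  qed
  have "(\<Sum>i\<in>UNIV. (norm (v i - c))\<^sup>2) = (\<Sum>i\<in>UNIV. (norm (v i - m))\<^sup>2) + (\<Sum>i\<in>UNIV. 2 * ((v i - m) \<bullet> (m - c))) + (\<Sum>i::'n\<in>UNIV. (norm (m - c))\<^sup>2)"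
    unfolding e by (simp add: sum.distrib)
  also have "(\<Sum>i\<in>UNIV. 2 * ((v i - m) \<bullet> (m - c))) = 2 * ((\<Sum>i\<in>UNIV. v i - m) \<bullet> (m - c))"
    by (simp only: sum_distrib_left inner_sum_left)
  also have "\<dots> = 0" by (simp only: s0 inner_zero_left mult_zero_right)
  finally have "(\<Sum>i\<in>UNIV. (norm (v i - c))\<^sup>2) = (\<Sum>i\<in>UNIV. (norm (v i - m))\<^sup>2) + (\<Sum>i::'n\<in>UNIV. (norm (m - c))\<^sup>2)" by simp
  moreover have "0 \<le> (\<Sum>i::'n\<in>UNIV. (norm (m - c))\<^sup>2)" by (intro sum_nonneg) simp
  ultimately show ?thesis unfolding m_def by linarith
qed

lemma young_sq:
  fixes a b :: "'a::real_inner"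
  assumes "0 < \<alpha>"
  shows "(norm (a - b))\<^sup>2 \<le> (1 + \<alpha>) * (norm a)\<^sup>2 + (1 + 1 / \<alpha>) * (norm b)\<^sup>2"
proof -
  have "0 \<le> (norm (\<alpha> *\<^sub>R a + b))\<^sup>2" by simp
  also have "\<dots> = \<alpha>\<^sup>2 * (norm a)\<^sup>2 + 2 * \<alpha> * (a \<bullet> b) + (norm b)\<^sup>2"
    by (simp add: norm_add_sq power_mult_distrib)
  finally have h0: "0 \<le> \<alpha> * (\<alpha> * (norm a)\<^sup>2 + 2 * (a \<bullet> b) + (norm b)\<^sup>2 / \<alpha>)"
    using assms by (simp add: algebra_simps power2_eq_square)
  have h: "- 2 * (a \<bullet> b) \<le> \<alpha> * (norm a)\<^sup>2 + (norm b)\<^sup>2 / \<alpha>"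
  proof -
    have "0 \<le> \<alpha> * (norm a)\<^sup>2 + 2 * (a \<bullet> b) + (norm b)\<^sup>2 / \<alpha>"
      using h0 assms by (simp add: zero_le_mult_iff)
    then show ?thesis by linarith
  qed
  have "(norm (a - b))\<^sup>2 = (norm a)\<^sup>2 - 2 * (a \<bullet> b) + (norm b)\<^sup>2"
    by (rule norm_diff_sq)
  then show ?thesis using h by (simp add: algebra_simps)
qed

lemma avg_mix:
  fixes W :: "real^'n^'n::finite" and Y :: "(real^'d)^'n"
  assumes "doubly_stochastic W"
  shows "avg (mix W Y) = avg Y"
proof -
  have "(\<Sum>i\<in>UNIV. mix W Y $ i) = (\<Sum>j\<in>UNIV. (\<Sum>i\<in>UNIV. W $ i $ j) *\<^sub>R Y $ j)"
  proof -
    have "(\<Sum>i\<in>UNIV. mix W Y $ i) = (\<Sum>i\<in>UNIV. \<Sum>j\<in>UNIV. W $ i $ j *\<^sub>R Y $ j)"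
      unfolding mix_def by simp
    also have "\<dots> = (\<Sum>j\<in>UNIV. \<Sum>i\<in>UNIV. W $ i $ j *\<^sub>R Y $ j)"
      by (rule sum.swap)
    also have "\<dots> = (\<Sum>j\<in>UNIV. (\<Sum>i\<in>UNIV. W $ i $ j) *\<^sub>R Y $ j)"
      by (simp only: scaleR_sum_left)
    finally show ?thesis .
  qed
  also have "\<dots> = (\<Sum>j\<in>UNIV. Y $ j)" using assms by (simp add: doubly_stochastic_def)
  finally show ?thesis by (simp add: avg_def)
qed

lemma noise_integral:
  fixes M :: "'b measure" and g :: "'b \<Rightarrow> 'a::euclidean_space"
  assumes P: "prob_space M" and gi: "integrable M g" and gh: "integral\<^sup>L M g = h"
    and fin: "(\<integral>\<^sup>+\<zeta>. ennreal ((norm (g \<zeta> - h))\<^sup>2) \<partial>M) < \<infinity>"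
  shows "(\<integral>\<^sup>+\<zeta>. ennreal ((norm (u - \<gamma> *\<^sub>R (g \<zeta> - h)))\<^sup>2) \<partial>M)
       = ennreal ((norm u)\<^sup>2) + ennreal (\<gamma>\<^sup>2) * (\<integral>\<^sup>+\<zeta>. ennreal ((norm (g \<zeta> - h))\<^sup>2) \<partial>M)"
proof -
  interpret prob_space M by (rule P)
  define e where "e = (\<lambda>\<zeta>. g \<zeta> - h)"
  have ei: "integrable M e" unfolding e_def using gi by simp
  have e0: "integral\<^sup>L M e = 0" unfolding e_def using gi gh by (simp add: prob_space)
  have em[measurable]: "e \<in> borel_measurable M" using ei by (rule borel_measurable_integrable)
  have eei: "integrable M (\<lambda>\<zeta>. (norm (e \<zeta>))\<^sup>2)"
  proof (rule integrableI_nonneg)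
    show "(\<lambda>\<zeta>. (norm (e \<zeta>))\<^sup>2) \<in> borel_measurable M" by measurable
    show "(\<integral>\<^sup>+ x. ennreal ((norm (e x))\<^sup>2) \<partial>M) < \<infinity>" using fin by (simp add: e_def)
  qed auto
  have pw: "(norm (u - \<gamma> *\<^sub>R e \<zeta>))\<^sup>2 = (norm u)\<^sup>2 - 2 * \<gamma> * (u \<bullet> e \<zeta>) + \<gamma>\<^sup>2 * (norm (e \<zeta>))\<^sup>2" for \<zeta>
    by (simp add: norm_diff_sq power_mult_distrib)
  have i1: "integrable M (\<lambda>\<zeta>. (norm u)\<^sup>2 - 2 * \<gamma> * (u \<bullet> e \<zeta>) + \<gamma>\<^sup>2 * (norm (e \<zeta>))\<^sup>2)"
    using ei eei by auto
  have i2: "(\<integral>\<zeta>. (norm u)\<^sup>2 - 2 * \<gamma> * (u \<bullet> e \<zeta>) + \<gamma>\<^sup>2 * (norm (e \<zeta>))\<^sup>2 \<partial>M)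
      = (norm u)\<^sup>2 + \<gamma>\<^sup>2 * (\<integral>\<zeta>. (norm (e \<zeta>))\<^sup>2 \<partial>M)"
    using ei eei e0 by (simp add: prob_space)
  have "(\<integral>\<^sup>+\<zeta>. ennreal ((norm (u - \<gamma> *\<^sub>R (g \<zeta> - h)))\<^sup>2) \<partial>M)
      = (\<integral>\<^sup>+\<zeta>. ennreal ((norm u)\<^sup>2 - 2 * \<gamma> * (u \<bullet> e \<zeta>) + \<gamma>\<^sup>2 * (norm (e \<zeta>))\<^sup>2) \<partial>M)"
    by (intro nn_integral_cong) (metis pw e_def)
  also have "\<dots> = ennreal ((norm u)\<^sup>2 + \<gamma>\<^sup>2 * (\<integral>\<zeta>. (norm (e \<zeta>))\<^sup>2 \<partial>M))"
  proof (subst nn_integral_eq_integral[OF i1])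
    show "AE x in M. 0 \<le> (norm u)\<^sup>2 - 2 * \<gamma> * (u \<bullet> e x) + \<gamma>\<^sup>2 * (norm (e x))\<^sup>2"
      by (intro AE_I2) (metis pw zero_le_power2)
  qed (simp only: i2)
  also have "\<dots> = ennreal ((norm u)\<^sup>2) + ennreal (\<gamma>\<^sup>2) * ennreal (\<integral>\<zeta>. (norm (e \<zeta>))\<^sup>2 \<partial>M)"
    by (simp add: ennreal_plus ennreal_mult integral_nonneg_AE)
  also have "ennreal (\<integral>\<zeta>. (norm (e \<zeta>))\<^sup>2 \<partial>M) = (\<integral>\<^sup>+\<zeta>. ennreal ((norm (g \<zeta> - h))\<^sup>2) \<partial>M)"
    using nn_integral_eq_integral[OF eei] by (simp add: e_def)
  finally show ?thesis .
qed

lemma cons_meas[measurable]: "consensus_sq \<in> borel_measurable (borel :: ((real^'d)^'n::finite) measure)"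
  unfolding consensus_sq_def avg_def by measurable

lemma step_bound:
  fixes D :: "'n::finite \<Rightarrow> 'b measure" and WD :: "(real^'n^'n) measure"
    and gF :: "'n \<Rightarrow> real^'d \<Rightarrow> 'b \<Rightarrow> real^'d" and gf :: "'n \<Rightarrow> real^'d \<Rightarrow> real^'d"
    and X :: "(real^'d)^'n"
  assumes D_prob: "\<And>i. prob_space (D i)"
    and gF_meas: "\<And>i. (\<lambda>(x, \<xi>). gF i x \<xi>) \<in> borel_measurable (borel \<Otimes>\<^sub>M D i)"
    and unbiased: "\<And>i x. integrable (D i) (gF i x) \<and> (\<integral>\<xi>. gF i x \<xi> \<partial>D i) = gf i x"
    and WD_prob: "prob_space WD"
    and WD_sets: "sets WD = sets borel"
    and A1_ds: "AE W in WD. doubly_stochastic W"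
    and p_range: "0 < p" "p \<le> 1"
    and A1_mix: "\<And>X :: (real^'d)^'n.
        (\<integral>\<^sup>+ W. ennreal (\<Sum>i\<in>UNIV. (norm (mix W X $ i - avg X))\<^sup>2) \<partial>WD)
          \<le> ennreal ((1 - p) * dev_sq X)"
    and A3: "\<And>X :: (real^'d)^'n.
        ennreal (1 / real CARD('n)) *
          (\<Sum>i\<in>UNIV. \<integral>\<^sup>+ \<xi>. ennreal ((norm (gF i (X $ i) \<xi> - gf i (X $ i)))\<^sup>2) \<partial>D i)
          \<le> ennreal (\<sigma>\<^sup>2)"
  shows "(\<integral>\<^sup>+Z. ennreal (consensus_sq Z) \<partial>dsgd_step D WD gF \<gamma> X)
     \<le> ennreal ((1 - p/2) * consensus_sq X + 3 * (1 - p) / p * \<gamma>\<^sup>2 * grad_sq gf X + (1 - p) * \<gamma>\<^sup>2 * \<sigma>\<^sup>2)"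
proof -
  define n where "n = real CARD('n)"
  have n_pos: "0 < n" unfolding n_def by simp
  define Yf where "Yf = (\<lambda>\<xi>. (\<chi> j. X $ j - \<gamma> *\<^sub>R gF j (X $ j) (\<xi> j)) :: (real^'d)^'n)"
  have Ym: "Yf \<in> borel_measurable (PiM UNIV D)"
    unfolding Yf_def using Y_meas[OF gF_meas] by measurable
  have K: "(\<lambda>\<xi>. WD \<bind> (\<lambda>W. return borel (mix W (Yf \<xi>)))) \<in> PiM UNIV D \<rightarrow>\<^sub>M prob_algebra borel"
    by (rule mixk_meas[OF WD_prob WD_sets Ym])
  have sdef: "dsgd_step D WD gF \<gamma> X = PiM UNIV D \<bind> (\<lambda>\<xi>. WD \<bind> (\<lambda>W. return borel (mix W (Yf \<xi>))))"
    unfolding dsgd_step_def Yf_def by simp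
  have step1: "(\<integral>\<^sup>+Z. ennreal (consensus_sq Z) \<partial>dsgd_step D WD gF \<gamma> X)
      = (\<integral>\<^sup>+\<xi>. (\<integral>\<^sup>+Z. ennreal (consensus_sq Z) \<partial>(WD \<bind> (\<lambda>W. return borel (mix W (Yf \<xi>))))) \<partial>PiM UNIV D)"
    unfolding sdef
    by (rule nn_integral_bind[OF _ measurable_prob_algebraD[OF K]]) measurable
  have step2: "(\<integral>\<^sup>+Z. ennreal (consensus_sq Z) \<partial>(WD \<bind> (\<lambda>W. return borel (mix W Y))))
      = (\<integral>\<^sup>+W. ennreal (consensus_sq (mix W Y)) \<partial>WD)" for Y :: "(real^'d)^'n"
  proof -
    have N: "(\<lambda>W. return borel (mix W Y)) \<in> WD \<rightarrow>\<^sub>M subprob_algebra borel"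
      using measurable_compose[OF mix_meas_WD[OF WD_sets] return_measurable] .
    show ?thesis
      by (subst nn_integral_bind[OF _ N]) (auto simp: nn_integral_return)
  qed
  have step3: "(\<integral>\<^sup>+W. ennreal (consensus_sq (mix W Y)) \<partial>WD) \<le> ennreal ((1 - p) / n * dev_sq Y)"
    for Y :: "(real^'d)^'n"
  proof -
    define S where "S = (\<lambda>W. (\<Sum>i\<in>UNIV. (norm (mix W Y $ i - avg Y))\<^sup>2))"
    have Sm: "(\<lambda>W. ennreal (S W)) \<in> borel_measurable WD"
      unfolding S_def using mix_meas_WD[OF WD_sets, of Y] by measurable
    have "AE W in WD. ennreal (consensus_sq (mix W Y)) = ennreal (1 / n) * ennreal (S W)"
      using A1_ds
    proof (rule AE_mp, intro AE_I2 impI)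
      fix W :: "real^'n^'n" assume "doubly_stochastic W"
      then have "consensus_sq (mix W Y) = (1 / n) * S W"
        unfolding consensus_sq_def S_def n_def by (simp add: avg_mix norm_minus_commute)
      then show "ennreal (consensus_sq (mix W Y)) = ennreal (1 / n) * ennreal (S W)"
      proof -
        have "0 \<le> S W" unfolding S_def by (intro sum_nonneg) simp
        then show ?thesis using n_pos \<open>consensus_sq (mix W Y) = (1 / n) * S W\<close>
          by (simp add: ennreal_mult[symmetric])
      qed
    qed
    then have "(\<integral>\<^sup>+W. ennreal (consensus_sq (mix W Y)) \<partial>WD) = (\<integral>\<^sup>+W. ennreal (1 / n) * ennreal (S W) \<partial>WD)"
      by (rule nn_integral_cong_AE)
    also have "\<dots> = ennreal (1 / n) * (\<integral>\<^sup>+W. ennreal (S W) \<partial>WD)"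
      by (rule nn_integral_cmult[OF Sm])
    also have "\<dots> \<le> ennreal (1 / n) * ennreal ((1 - p) * dev_sq Y)"
      by (rule mult_left_mono) (use A1_mix[of Y] in \<open>auto simp: S_def\<close>)
    also have "\<dots> = ennreal ((1 - p) / n * dev_sq Y)"
    proof -
      have "0 \<le> dev_sq Y" unfolding dev_sq_def by (intro sum_nonneg) simp
      then show ?thesis using n_pos p_range by (simp add: ennreal_mult[symmetric])
    qed
    finally show ?thesis .
  qed
  have step4: "dev_sq (Yf \<xi>) \<le> (\<Sum>i\<in>UNIV. (norm (((X $ i - avg X) - \<gamma> *\<^sub>R (gf i (X $ i) - (1 / n) *\<^sub>R (\<Sum>j\<in>UNIV. gf j (X $ j))))
             - \<gamma> *\<^sub>R (gF i (X $ i) (\<xi> i) - gf i (X $ i))))\<^sup>2)" for \<xi>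
  proof -
    define c where "c = avg X - \<gamma> *\<^sub>R ((1 / n) *\<^sub>R (\<Sum>j\<in>UNIV. gf j (X $ j)))"
    have "dev_sq (Yf \<xi>) = (\<Sum>i\<in>UNIV. (norm (Yf \<xi> $ i - (1 / real CARD('n)) *\<^sub>R (\<Sum>j\<in>UNIV. Yf \<xi> $ j)))\<^sup>2)"
      unfolding dev_sq_def avg_def by (simp add: norm_minus_commute)
    also have "\<dots> \<le> (\<Sum>i\<in>UNIV. (norm (Yf \<xi> $ i - c))\<^sup>2)"
      by (rule avg_min)
    also have "\<dots> = (\<Sum>i\<in>UNIV. (norm (((X $ i - avg X) - \<gamma> *\<^sub>R (gf i (X $ i) - (1 / n) *\<^sub>R (\<Sum>j\<in>UNIV. gf j (X $ j))))
             - \<gamma> *\<^sub>R (gF i (X $ i) (\<xi> i) - gf i (X $ i))))\<^sup>2)"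
      by (intro sum.cong refl arg_cong[where f="\<lambda>v. (norm v)\<^sup>2"]) (simp add: Yf_def c_def algebra_simps)
    finally show ?thesis .
  qed
  define hb where "hb = (1 / n) *\<^sub>R (\<Sum>j\<in>UNIV. gf j (X $ j))"
  define u where "u = (\<lambda>i. (X $ i - avg X) - \<gamma> *\<^sub>R (gf i (X $ i) - hb))"
  define q where "q = (\<lambda>i \<zeta>. (norm (u i - \<gamma> *\<^sub>R (gF i (X $ i) \<zeta> - gf i (X $ i))))\<^sup>2)"
  define N where "N = (\<lambda>i. \<integral>\<^sup>+ \<zeta>. ennreal ((norm (gF i (X $ i) \<zeta> - gf i (X $ i)))\<^sup>2) \<partial>D i)"
  have Gm: "(\<lambda>\<zeta>. gF i (X $ i) \<zeta>) \<in> borel_measurable (D i)" for i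
    using unbiased[of i "X $ i"] by (simp add: borel_measurable_integrable)
  have qm: "(\<lambda>\<zeta>. ennreal (q i \<zeta>)) \<in> borel_measurable (D i)" for i
    unfolding q_def using Gm[of i] by measurable
  have qm': "(\<lambda>\<xi>. ennreal (q i (\<xi> i))) \<in> borel_measurable (PiM UNIV D)" for i
    using measurable_compose[OF measurable_component_singleton[of i UNIV D] qm[of i]] by simp
  have marg: "(\<integral>\<^sup>+\<xi>. ennreal (q i (\<xi> i)) \<partial>PiM UNIV D) = (\<integral>\<^sup>+\<zeta>. ennreal (q i \<zeta>) \<partial>D i)" for i
  proof -
    have "(\<integral>\<^sup>+\<zeta>. ennreal (q i \<zeta>) \<partial>D i) = (\<integral>\<^sup>+\<zeta>. ennreal (q i \<zeta>) \<partial>distr (PiM UNIV D) (D i) (\<lambda>\<omega>. \<omega> i))"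
      by (simp add: distr_PiM_component D_prob)
    also have "\<dots> = (\<integral>\<^sup>+\<xi>. ennreal (q i (\<xi> i)) \<partial>PiM UNIV D)"
      by (rule nn_integral_distr) (auto simp: distr_PiM_component D_prob qm)
    finally show ?thesis by simp
  qed
  have sumN: "(\<Sum>i\<in>UNIV. N i) \<le> ennreal (n * \<sigma>\<^sup>2)"
  proof -
    have "(\<Sum>i\<in>UNIV. N i) = ennreal n * (ennreal (1 / n) * (\<Sum>i\<in>UNIV. N i))"
      using n_pos by (simp add: mult.assoc[symmetric] ennreal_mult[symmetric])
    also have "\<dots> \<le> ennreal n * ennreal (\<sigma>\<^sup>2)"
      by (rule mult_left_mono) (use A3[of X] in \<open>auto simp: N_def n_def\<close>)
    also have "\<dots> = ennreal (n * \<sigma>\<^sup>2)" using n_pos by (simp add: ennreal_mult)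
    finally show ?thesis .
  qed
  have Nfin: "N i < \<infinity>" for i
  proof -
    have "N i \<le> (\<Sum>i\<in>UNIV. N i)" by (rule member_le_sum) auto
    also have "\<dots> < \<infinity>" using sumN by (simp add: le_less_trans)
    finally show ?thesis .
  qed
  have qint: "(\<integral>\<^sup>+\<zeta>. ennreal (q i \<zeta>) \<partial>D i) = ennreal ((norm (u i))\<^sup>2) + ennreal (\<gamma>\<^sup>2) * N i" for i
    unfolding q_def N_def
    by (rule noise_integral[OF D_prob]) (use unbiased[of i "X $ i"] Nfin[of i] in \<open>auto simp: N_def\<close>)
  have "(\<integral>\<^sup>+Z. ennreal (consensus_sq Z) \<partial>dsgd_step D WD gF \<gamma> X)
      \<le> (\<integral>\<^sup>+\<xi>. ennreal ((1 - p) / n * dev_sq (Yf \<xi>)) \<partial>PiM UNIV D)"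
    unfolding step1 by (intro nn_integral_mono) (simp only: step2 step3)
  also have "\<dots> \<le> (\<integral>\<^sup>+\<xi>. ennreal ((1 - p) / n) * (\<Sum>i\<in>UNIV. ennreal (q i (\<xi> i))) \<partial>PiM UNIV D)"
  proof (intro nn_integral_mono)
    fix \<xi> :: "'n \<Rightarrow> 'b"
    have "(1 - p) / n * dev_sq (Yf \<xi>) \<le> (1 - p) / n * (\<Sum>i\<in>UNIV. q i (\<xi> i))"
      using step4[of \<xi>] p_range n_pos unfolding q_def u_def hb_def
      by (intro mult_left_mono) auto
    then show "ennreal ((1 - p) / n * dev_sq (Yf \<xi>)) \<le> ennreal ((1 - p) / n) * (\<Sum>i\<in>UNIV. ennreal (q i (\<xi> i)))"
      using p_range n_pos by (simp add: q_def ennreal_mult[symmetric] sum_nonneg ennreal_leI)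
  qed
  also have "\<dots> = ennreal ((1 - p) / n) * (\<Sum>i\<in>UNIV. \<integral>\<^sup>+\<zeta>. ennreal (q i \<zeta>) \<partial>D i)"
    using qm' by (simp add: nn_integral_cmult nn_integral_sum marg)
  also have "\<dots> = ennreal ((1 - p) / n) * (ennreal (\<Sum>i\<in>UNIV. (norm (u i))\<^sup>2) + ennreal (\<gamma>\<^sup>2) * (\<Sum>i\<in>UNIV. N i))"
    by (simp add: qint sum.distrib sum_distrib_left)
  also have "\<dots> \<le> ennreal ((1 - p) / n) * (ennreal (\<Sum>i\<in>UNIV. (norm (u i))\<^sup>2) + ennreal (\<gamma>\<^sup>2) * ennreal (n * \<sigma>\<^sup>2))"
    by (intro mult_left_mono add_left_mono sumN) auto
  also have "\<dots> = ennreal ((1 - p) / n * ((\<Sum>i\<in>UNIV. (norm (u i))\<^sup>2) + \<gamma>\<^sup>2 * (n * \<sigma>\<^sup>2)))"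
  proof -
    have s0: "0 \<le> (\<Sum>i\<in>UNIV. (norm (u i))\<^sup>2)" by (intro sum_nonneg) auto
    have e1: "ennreal (\<Sum>i\<in>UNIV. (norm (u i))\<^sup>2) + ennreal (\<gamma>\<^sup>2) * ennreal (n * \<sigma>\<^sup>2)
        = ennreal ((\<Sum>i\<in>UNIV. (norm (u i))\<^sup>2) + \<gamma>\<^sup>2 * (n * \<sigma>\<^sup>2))"
      using s0 n_pos by (simp add: ennreal_mult[symmetric])
    show ?thesis unfolding e1
      by (rule ennreal_mult[symmetric]) (use s0 n_pos p_range in auto)
  qed
  also have "\<dots> \<le> ennreal ((1 - p/2) * consensus_sq X + 3 * (1 - p) / p * \<gamma>\<^sup>2 * grad_sq gf X + (1 - p) * \<gamma>\<^sup>2 * \<sigma>\<^sup>2)"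
  proof (rule ennreal_leI)
    define A where "A = (\<Sum>i\<in>UNIV. (norm (X $ i - avg X))\<^sup>2)"
    define B where "B = (\<Sum>i\<in>UNIV. (norm (gf i (X $ i)))\<^sup>2)"
    have A0: "0 \<le> A" unfolding A_def by (intro sum_nonneg) auto
    have B0: "0 \<le> B" unfolding B_def by (intro sum_nonneg) auto
    have cA: "consensus_sq X = A / n" unfolding consensus_sq_def A_def n_def by (simp add: norm_minus_commute)
    have gB: "grad_sq gf X = B / n" unfolding grad_sq_def B_def n_def by simp
    have hB: "(\<Sum>i\<in>UNIV. (norm (gf i (X $ i) - hb))\<^sup>2) \<le> B"
      using avg_min[of "\<lambda>i. gf i (X $ i)" 0] unfolding B_def hb_def n_def by simp
    have pu: "(norm (u i))\<^sup>2 \<le> (1 + p/2) * (norm (X $ i - avg X))\<^sup>2 + (1 + 2/p) * \<gamma>\<^sup>2 * (norm (gf i (X $ i) - hb))\<^sup>2" for i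
      using young_sq[of "p/2" "X $ i - avg X" "\<gamma> *\<^sub>R (gf i (X $ i) - hb)"] p_range
      by (simp add: u_def power_mult_distrib)
    have U: "(\<Sum>i\<in>UNIV. (norm (u i))\<^sup>2) \<le> (1 + p/2) * A + (1 + 2/p) * \<gamma>\<^sup>2 * B"
    proof -
      have "(\<Sum>i\<in>UNIV. (norm (u i))\<^sup>2) \<le> (\<Sum>i\<in>UNIV. (1 + p/2) * (norm (X $ i - avg X))\<^sup>2 + (1 + 2/p) * \<gamma>\<^sup>2 * (norm (gf i (X $ i) - hb))\<^sup>2)"
        by (rule sum_mono) (rule pu)
      also have "\<dots> = (1 + p/2) * A + (1 + 2/p) * \<gamma>\<^sup>2 * (\<Sum>i\<in>UNIV. (norm (gf i (X $ i) - hb))\<^sup>2)"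
        by (simp add: A_def sum.distrib sum_distrib_left)
      also have "\<dots> \<le> (1 + p/2) * A + (1 + 2/p) * \<gamma>\<^sup>2 * B"
        using hB p_range by (intro add_left_mono mult_left_mono) auto
      finally show ?thesis .
    qed
    have c1: "(1 - p) * (1 + p/2) \<le> 1 - p/2"
    proof -
      have "(1 - p) * (1 + p/2) = 1 - p/2 - p * p / 2" by (simp add: field_simps)
      moreover have "0 \<le> p * p" by simp
      ultimately show ?thesis by linarith
    qed
    have c2: "(1 - p) * (1 + 2/p) \<le> 3 * (1 - p) / p"
    proof -
      have "1 \<le> 1 / p" using p_range by (simp add: field_simps)
      then have "(1 + 2/p) \<le> 3 / p" by simp
      then have "(1 - p) * (1 + 2/p) \<le> (1 - p) * (3 / p)" using p_range by (intro mult_left_mono) auto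
      then show ?thesis by (simp add: mult.commute)
    qed
    have "(1 - p) / n * ((\<Sum>i\<in>UNIV. (norm (u i))\<^sup>2) + \<gamma>\<^sup>2 * (n * \<sigma>\<^sup>2))
        \<le> (1 - p) / n * ((1 + p/2) * A + (1 + 2/p) * \<gamma>\<^sup>2 * B + \<gamma>\<^sup>2 * (n * \<sigma>\<^sup>2))"
      using U p_range n_pos by (intro mult_left_mono) auto
    also have "\<dots> = ((1 - p) * (1 + p/2)) * (A / n) + ((1 - p) * (1 + 2/p)) * (\<gamma>\<^sup>2 * (B / n)) + (1 - p) * \<gamma>\<^sup>2 * \<sigma>\<^sup>2"
      using n_pos by (simp add: field_simps)
    also have "\<dots> \<le> (1 - p/2) * (A / n) + (3 * (1 - p) / p) * (\<gamma>\<^sup>2 * (B / n)) + (1 - p) * \<gamma>\<^sup>2 * \<sigma>\<^sup>2"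
      using c1 c2 A0 B0 n_pos by (intro add_mono mult_right_mono) auto
    finally show "(1 - p) / n * ((\<Sum>i\<in>UNIV. (norm (u i))\<^sup>2) + \<gamma>\<^sup>2 * (n * \<sigma>\<^sup>2))
        \<le> (1 - p/2) * consensus_sq X + 3 * (1 - p) / p * \<gamma>\<^sup>2 * grad_sq gf X + (1 - p) * \<gamma>\<^sup>2 * \<sigma>\<^sup>2"
      by (simp add: cA gB mult.assoc)
  qed
  finally show ?thesis .
qed

theorem proposition2:
  fixes D :: "'n::finite \<Rightarrow> 'b measure"
    and WD :: "(real^'n^'n) measure"
    and F :: "'n \<Rightarrow> real^'d \<Rightarrow> 'b \<Rightarrow> real"
    and gradF :: "'n \<Rightarrow> real^'d \<Rightarrow> 'b \<Rightarrow> real^'d"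
    and f :: "'n \<Rightarrow> real^'d \<Rightarrow> real"
    and gradf :: "'n \<Rightarrow> real^'d \<Rightarrow> real^'d"
    and \<gamma> p \<sigma> :: real
    and x0 :: "real^'d"
    and a b :: "nat \<Rightarrow> ennreal"
  assumes D_prob: "\<And>i. prob_space (D i)"
    and F_int: "\<And>i x. integrable (D i) (F i x)"
    and f_def: "\<And>i x. f i x = (\<integral>\<xi>. F i x \<xi> \<partial>D i)"
    and F_grad: "\<And>i x \<xi>. \<xi> \<in> space (D i) \<Longrightarrow>
                    ((\<lambda>y. F i y \<xi>) has_derivative (\<lambda>h. gradF i x \<xi> \<bullet> h)) (at x)"
    and f_grad: "\<And>i x. (f i has_derivative (\<lambda>h. gradf i x \<bullet> h)) (at x)"
    and gradF_meas: "\<And>i. (\<lambda>(x, \<xi>). gradF i x \<xi>) \<in> borel_measurable (borel \<Otimes>\<^sub>M D i)"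
    and unbiased: "\<And>i x. integrable (D i) (gradF i x) \<and> (\<integral>\<xi>. gradF i x \<xi> \<partial>D i) = gradf i x"
    and WD_prob: "prob_space WD"
    and WD_sets: "sets WD = sets borel"
    and A1_ds: "AE W in WD. doubly_stochastic W"
    and p_range: "0 < p" "p \<le> 1"
    and A1_mix: "\<And>X :: (real^'d)^'n.
        (\<integral>\<^sup>+ W. ennreal (\<Sum>i\<in>UNIV. (norm (mix W X $ i - avg X))\<^sup>2) \<partial>WD)
          \<le> ennreal ((1 - p) * dev_sq X)"
    and A3: "\<And>X :: (real^'d)^'n.
        ennreal (1 / real CARD('n)) *
          (\<Sum>i\<in>UNIV. \<integral>\<^sup>+ \<xi>. ennreal ((norm (gradF i (X $ i) \<xi> - gradf i (X $ i)))\<^sup>2) \<partial>D i)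
          \<le> ennreal (\<sigma>\<^sup>2)"
    and \<gamma>_pos: "0 < \<gamma>"
    and a_def: "\<And>t. a t = (\<integral>\<^sup>+ X. ennreal (consensus_sq X) \<partial>dsgd_law D WD gradF \<gamma> x0 t)"
    and b_def: "\<And>t. b t = (\<integral>\<^sup>+ X. ennreal (grad_sq gradf X) \<partial>dsgd_law D WD gradF \<gamma> x0 t)"
  shows "(\<forall>\<phi>::real. 0 \<le> \<phi> \<longrightarrow> (\<forall>t. b t \<le> ennreal (\<phi>\<^sup>2)) \<longrightarrow>
            (\<forall>t. a t \<le> ennreal (6 * (1 - p) * \<gamma>\<^sup>2 * (\<phi>\<^sup>2 / p\<^sup>2 + \<sigma>\<^sup>2 / p))))
       \<and> ((\<forall>t. b t \<le> ennreal (1 + p / 4) * b (Suc t)) \<longrightarrow>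
            (\<forall>t\<ge>1. a t \<le> ennreal (12 * (1 - p) * \<gamma>\<^sup>2) *
                         (b (t - 1) / ennreal (p\<^sup>2) + ennreal (\<sigma>\<^sup>2 / p))))"
proof -
  define step where "step = dsgd_step D WD gradF \<gamma>"
  define L where "L = dsgd_law D WD gradF \<gamma> x0"
  define \<alpha> where "\<alpha> = 1 - p / 2"
  define \<beta> where "\<beta> = 3 * (1 - p) / p * \<gamma>\<^sup>2"
  define C where "C = (1 - p) * \<gamma>\<^sup>2 * \<sigma>\<^sup>2"
  have \<alpha>0: "0 \<le> \<alpha>" using p_range by (simp add: \<alpha>_def)
  have \<beta>0: "0 \<le> \<beta>" using p_range by (simp add: \<beta>_def)
  have C0: "0 \<le> C" using p_range by (simp add: C_def)
  have SM: "step \<in> borel \<rightarrow>\<^sub>M prob_algebra borel"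
    unfolding step_def by (rule step_meas[OF D_prob gradF_meas WD_prob WD_sets])
  have gfm: "(\<lambda>x. gradf i x) \<in> borel_measurable borel" for i
  proof -
    interpret prob_space "D i" by (rule D_prob)
    have "(\<lambda>x. \<integral>\<xi>. gradF i x \<xi> \<partial>D i) \<in> borel_measurable borel"
      by (rule borel_measurable_lebesgue_integral) (rule gradF_meas)
    then show ?thesis using unbiased by simp
  qed
  have gsm: "(\<lambda>X. ennreal (grad_sq gradf X)) \<in> borel_measurable (borel :: ((real^'d)^'n) measure)"
    unfolding grad_sq_def using gfm by measurable
  have csm: "(\<lambda>X. ennreal (consensus_sq X)) \<in> borel_measurable (borel :: ((real^'d)^'n) measure)"
    by measurable
  have Lsp: "L t \<in> space (prob_algebra borel)" for t
  proof (induction t)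
    case 0 then show ?case by (simp add: L_def dsgd_law_def space_prob_algebra prob_space_return)
  next
    case (Suc t)
    have eq: "L (Suc t) = L t \<bind> step" by (simp add: L_def dsgd_law_def step_def)
    show ?case unfolding eq space_prob_algebra
      using prob_space_bind'[OF Suc SM] sets_bind'[OF Suc SM] by simp
  qed
  have Lsets: "sets (L t) = sets borel" and Lprob: "prob_space (L t)" for t
    using Lsp[of t] by (auto simp: space_prob_algebra)
  have a0: "a 0 = 0"
  proof -
    have "avg (\<chi> i. x0 :: (real^'d)^'n) = x0"
      unfolding avg_def by (simp add: sum_constant_scaleR del: sum_constant)
    then show ?thesis unfolding a_def dsgd_law_def funpow_0
      by (subst nn_integral_return[OF _ csm]) (auto simp: consensus_sq_def)
  qed
  have rec: "a (Suc t) \<le> ennreal \<alpha> * a t + ennreal \<beta> * b t + ennreal C" for t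
  proof -
    have eq: "L (Suc t) = L t \<bind> step" by (simp add: L_def dsgd_law_def step_def)
    have SM': "step \<in> L t \<rightarrow>\<^sub>M subprob_algebra borel"
      using measurable_prob_algebraD[OF SM] by (subst measurable_cong_sets[OF Lsets refl])
    have "a (Suc t) = (\<integral>\<^sup>+X. (\<integral>\<^sup>+Z. ennreal (consensus_sq Z) \<partial>step X) \<partial>L t)"
      unfolding a_def L_def[symmetric] eq by (rule nn_integral_bind[OF csm SM'])
    also have "\<dots> \<le> (\<integral>\<^sup>+X. ennreal \<alpha> * ennreal (consensus_sq X) + ennreal \<beta> * ennreal (grad_sq gradf X) + ennreal C \<partial>L t)"
    proof (intro nn_integral_mono)
      fix X :: "(real^'d)^'n"
      have c0: "0 \<le> consensus_sq X" unfolding consensus_sq_def by (intro mult_nonneg_nonneg sum_nonneg) auto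
      have g0: "0 \<le> grad_sq gradf X" unfolding grad_sq_def by (intro mult_nonneg_nonneg sum_nonneg) auto
      have "(\<integral>\<^sup>+Z. ennreal (consensus_sq Z) \<partial>step X) \<le> ennreal (\<alpha> * consensus_sq X + \<beta> * grad_sq gradf X + C)"
        unfolding step_def \<alpha>_def \<beta>_def C_def
        by (rule step_bound[OF D_prob gradF_meas unbiased WD_prob WD_sets A1_ds p_range A1_mix A3])
      also have "\<dots> = ennreal \<alpha> * ennreal (consensus_sq X) + ennreal \<beta> * ennreal (grad_sq gradf X) + ennreal C"
        using \<alpha>0 \<beta>0 C0 c0 g0 by (simp add: ennreal_mult)
      finally show "(\<integral>\<^sup>+Z. ennreal (consensus_sq Z) \<partial>step X) \<le> ennreal \<alpha> * ennreal (consensus_sq X) + ennreal \<beta> * ennreal (grad_sq gradf X) + ennreal C" .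
    qed
    also have "\<dots> = ennreal \<alpha> * a t + ennreal \<beta> * b t + ennreal C"
    proof -
      have m1: "(\<lambda>X. ennreal (consensus_sq X)) \<in> borel_measurable (L t)"
        using csm by (subst measurable_cong_sets[OF Lsets refl])
      have m2: "(\<lambda>X. ennreal (grad_sq gradf X)) \<in> borel_measurable (L t)"
        using gsm by (subst measurable_cong_sets[OF Lsets refl])
      show ?thesis
        using m1 m2 prob_space.emeasure_space_1[OF Lprob[of t]]
        by (simp add: nn_integral_add nn_integral_cmult a_def b_def L_def)
    qed
    finally show ?thesis .
  qed
  have part1: "\<forall>t. a t \<le> ennreal (6 * (1 - p) * \<gamma>\<^sup>2 * (\<phi>\<^sup>2 / p\<^sup>2 + \<sigma>\<^sup>2 / p))"
    if \<phi>0: "0 \<le> \<phi>" and b\<phi>: "\<forall>t. b t \<le> ennreal (\<phi>\<^sup>2)" for \<phi> :: real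
  proof -
    define K where "K = 2 / p * (\<beta> * \<phi>\<^sup>2 + C)"
    have K0: "0 \<le> K" using p_range \<beta>0 C0 by (simp add: K_def)
    have Kfix: "\<alpha> * K + \<beta> * \<phi>\<^sup>2 + C = K"
      using p_range by (simp add: K_def \<alpha>_def field_simps)
    have aK: "a t \<le> ennreal K" for t
    proof (induction t)
      case 0 then show ?case by (simp add: a0)
    next
      case (Suc t)
      have "a (Suc t) \<le> ennreal \<alpha> * a t + ennreal \<beta> * b t + ennreal C" by (rule rec)
      also have "\<dots> \<le> ennreal \<alpha> * ennreal K + ennreal \<beta> * ennreal (\<phi>\<^sup>2) + ennreal C"
        using Suc b\<phi> by (intro add_mono mult_left_mono) auto
      also have "\<dots> = ennreal (\<alpha> * K + \<beta> * \<phi>\<^sup>2 + C)"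
        using \<alpha>0 \<beta>0 C0 K0 by (simp add: ennreal_mult)
      finally show ?case by (simp only: Kfix)
    qed
    have "K = (1 - p) * \<gamma>\<^sup>2 * (6 * (\<phi>\<^sup>2 / p\<^sup>2) + 2 * (\<sigma>\<^sup>2 / p))"
      using p_range by (simp add: K_def \<beta>_def C_def field_simps power2_eq_square)
    also have "\<dots> \<le> (1 - p) * \<gamma>\<^sup>2 * (6 * (\<phi>\<^sup>2 / p\<^sup>2) + 6 * (\<sigma>\<^sup>2 / p))"
    proof -
      have "0 \<le> \<sigma>\<^sup>2 / p" using p_range by simp
      then have "2 * (\<sigma>\<^sup>2 / p) \<le> 6 * (\<sigma>\<^sup>2 / p)" by linarith
      then show ?thesis using p_range by (intro mult_left_mono add_left_mono) auto
    qed
    also have "\<dots> = 6 * (1 - p) * \<gamma>\<^sup>2 * (\<phi>\<^sup>2 / p\<^sup>2 + \<sigma>\<^sup>2 / p)"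
    proof -
      have "\<And>x y. (1 - p) * \<gamma>\<^sup>2 * (6 * x + 6 * y) = 6 * (1 - p) * \<gamma>\<^sup>2 * (x + y)"
        by (simp add: algebra_simps)
      then show ?thesis by blast
    qed
    finally have "K \<le> 6 * (1 - p) * \<gamma>\<^sup>2 * (\<phi>\<^sup>2 / p\<^sup>2 + \<sigma>\<^sup>2 / p)" .
    then show ?thesis using aK order_trans ennreal_leI by blast
  qed
  have part2: "\<forall>t\<ge>1. a t \<le> ennreal (12 * (1 - p) * \<gamma>\<^sup>2) * (b (t - 1) / ennreal (p\<^sup>2) + ennreal (\<sigma>\<^sup>2 / p))"
    if hb: "\<forall>t. b t \<le> ennreal (1 + p / 4) * b (Suc t)"
  proof -
    define K1 where "K1 = 12 * (1 - p) * \<gamma>\<^sup>2 / p\<^sup>2"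
    define K2 where "K2 = 2 * (1 - p) * \<gamma>\<^sup>2 * \<sigma>\<^sup>2 / p"
    have K10: "0 \<le> K1" using p_range by (simp add: K1_def)
    have K20: "0 \<le> K2" using p_range by (simp add: K2_def)
    have \<beta>K1: "\<beta> \<le> K1"
    proof -
      have "3 / p \<le> 12 / p\<^sup>2" using p_range by (simp add: field_simps power2_eq_square)
      then have "(1 - p) * \<gamma>\<^sup>2 * (3 / p) \<le> (1 - p) * \<gamma>\<^sup>2 * (12 / p\<^sup>2)"
        using p_range by (intro mult_left_mono) auto
      moreover have "\<beta> = (1 - p) * \<gamma>\<^sup>2 * (3 / p)" unfolding \<beta>_def by simp
      moreover have "K1 = (1 - p) * \<gamma>\<^sup>2 * (12 / p\<^sup>2)" unfolding K1_def by simp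
      ultimately show ?thesis by simp
    qed
    have CK2: "C \<le> K2"
    proof -
      have "1 \<le> 2 / p" using p_range by (simp add: field_simps)
      then have "(1 - p) * \<gamma>\<^sup>2 * \<sigma>\<^sup>2 * 1 \<le> (1 - p) * \<gamma>\<^sup>2 * \<sigma>\<^sup>2 * (2 / p)"
        using p_range by (intro mult_left_mono) auto
      moreover have "K2 = (1 - p) * \<gamma>\<^sup>2 * \<sigma>\<^sup>2 * (2 / p)" unfolding K2_def by simp
      ultimately show ?thesis by (simp add: C_def)
    qed
    have q1: "\<alpha> * K1 * (1 + p / 4) + \<beta> \<le> K1"
    proof -
      have "\<alpha> * (1 + p / 4) \<le> 1 - p / 4"
        using p_range by (simp add: \<alpha>_def field_simps power2_eq_square)
      then have "K1 * (\<alpha> * (1 + p / 4)) \<le> K1 * (1 - p / 4)" using K10 by (intro mult_left_mono) auto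
      moreover have "K1 * (p / 4) = \<beta>" using p_range by (simp add: K1_def \<beta>_def field_simps power2_eq_square)
      ultimately show ?thesis by (simp add: algebra_simps)
    qed
    have q2: "\<alpha> * K2 + C = K2" using p_range by (simp add: \<alpha>_def K2_def C_def field_simps)
    have main: "a (Suc t) \<le> ennreal K1 * b t + ennreal K2" for t
    proof (induction t)
      case 0
      have "a (Suc 0) \<le> ennreal \<alpha> * a 0 + ennreal \<beta> * b 0 + ennreal C" by (rule rec)
      also have "\<dots> = ennreal \<beta> * b 0 + ennreal C" by (simp add: a0)
      also have "\<dots> \<le> ennreal K1 * b 0 + ennreal K2"
        using \<beta>K1 CK2 by (intro add_mono mult_right_mono ennreal_leI) auto
      finally show ?case .
    next
      case (Suc t)
      define E where "E = b (Suc t)"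
      have "a (Suc (Suc t)) \<le> ennreal \<alpha> * a (Suc t) + ennreal \<beta> * E + ennreal C"
        unfolding E_def by (rule rec)
      also have "\<dots> \<le> ennreal \<alpha> * (ennreal K1 * (ennreal (1 + p / 4) * E) + ennreal K2) + ennreal \<beta> * E + ennreal C"
      proof -
        have "a (Suc t) \<le> ennreal K1 * (ennreal (1 + p / 4) * E) + ennreal K2"
          using Suc hb unfolding E_def
          by (meson add_mono_thms_linordered_semiring(3) mult_left_mono order_trans zero_le)
        then show ?thesis by (intro add_mono mult_left_mono) auto
      qed
      also have "\<dots> = ennreal (\<alpha> * K1 * (1 + p / 4) + \<beta>) * E + ennreal (\<alpha> * K2 + C)"
      proof -
        have q0: "0 \<le> 1 + p / 4" using p_range by simp
        have e1: "ennreal \<alpha> * (ennreal K1 * (ennreal (1 + p / 4) * E)) = ennreal (\<alpha> * K1 * (1 + p / 4)) * E"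
          using \<alpha>0 K10 q0 by (simp add: ennreal_mult mult.assoc)
        have e2: "ennreal \<alpha> * ennreal K2 = ennreal (\<alpha> * K2)" using \<alpha>0 K20 by (simp add: ennreal_mult)
        have e3: "ennreal (\<alpha> * K1 * (1 + p / 4)) * E + ennreal \<beta> * E = ennreal (\<alpha> * K1 * (1 + p / 4) + \<beta>) * E"
        proof -
          have "0 \<le> \<alpha> * K1 * (1 + p / 4)" using \<alpha>0 K10 q0 by simp
          then show ?thesis using \<beta>0 by (simp only: ennreal_plus distrib_right)
        qed
        have e4: "ennreal (\<alpha> * K2) + ennreal C = ennreal (\<alpha> * K2 + C)" using \<alpha>0 K20 C0 by simp
        have "ennreal \<alpha> * (ennreal K1 * (ennreal (1 + p / 4) * E) + ennreal K2) + ennreal \<beta> * E + ennreal C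
            = (ennreal (\<alpha> * K1 * (1 + p / 4)) * E + ennreal \<beta> * E) + (ennreal (\<alpha> * K2) + ennreal C)"
          by (simp only: distrib_left e1 e2 add.assoc add.left_commute add.commute)
        also have "\<dots> = ennreal (\<alpha> * K1 * (1 + p / 4) + \<beta>) * E + ennreal (\<alpha> * K2 + C)"
          by (simp only: e3 e4)
        finally show ?thesis .
      qed
      also have "\<dots> \<le> ennreal K1 * E + ennreal K2"
        using q1 q2 by (intro add_mono mult_right_mono ennreal_leI) auto
      finally show ?case unfolding E_def .
    qed
    show ?thesis
    proof (intro allI impI)
      fix t :: nat assume "1 \<le> t"
      then obtain s where t: "t = Suc s" by (cases t) auto
      define M where "M = 12 * (1 - p) * \<gamma>\<^sup>2"
      have M0: "0 \<le> M" using p_range by (simp add: M_def)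
      have "a t \<le> ennreal K1 * b s + ennreal K2" unfolding t by (rule main)
      also have "\<dots> \<le> ennreal (M / p\<^sup>2) * b s + ennreal (M * (\<sigma>\<^sup>2 / p))"
      proof -
        have "K2 \<le> M * (\<sigma>\<^sup>2 / p)"
        proof -
          have "(1 - p) * \<gamma>\<^sup>2 * (\<sigma>\<^sup>2 / p) * 2 \<le> (1 - p) * \<gamma>\<^sup>2 * (\<sigma>\<^sup>2 / p) * 12"
            using p_range by (intro mult_left_mono) auto
          then show ?thesis by (simp add: K2_def M_def field_simps)
        qed
        moreover have "K1 = M / p\<^sup>2" by (simp add: K1_def M_def)
        ultimately show ?thesis by (intro add_mono ennreal_leI) auto
      qed
      also have "\<dots> = ennreal M * (b s / ennreal (p\<^sup>2) + ennreal (\<sigma>\<^sup>2 / p))"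
      proof -
        have d: "b s / ennreal (p\<^sup>2) = b s * ennreal (1 / p\<^sup>2)"
          using p_range by (simp add: divide_ennreal_def inverse_ennreal divide_inverse)
        have e1: "ennreal M * (b s * ennreal (1 / p\<^sup>2)) = ennreal (M / p\<^sup>2) * b s"
        proof -
          have "ennreal (M / p\<^sup>2) = ennreal M * ennreal (1 / p\<^sup>2)"
            using M0 p_range by (simp add: ennreal_mult[symmetric])
          then show ?thesis by (simp only: mult.commute mult.left_commute)
        qed
        have e2: "ennreal M * ennreal (\<sigma>\<^sup>2 / p) = ennreal (M * (\<sigma>\<^sup>2 / p))"
          using M0 p_range by (subst ennreal_mult) auto
        show ?thesis unfolding d distrib_left e1 e2 ..
      qed
      finally show "a t \<le> ennreal (12 * (1 - p) * \<gamma>\<^sup>2) * (b (t - 1) / ennreal (p\<^sup>2) + ennreal (\<sigma>\<^sup>2 / p))"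
        by (simp add: t M_def)
    qed
  qed
  show ?thesis using part1 part2 by blast
qed

end
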